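(* Let $\bm\alpha,\bm\beta\in\mathbb C^\ell$ with $\bm\alpha\neq0$ and $\bm\beta\neq0$, and let $d\in\mathbb C$. Then $L(d,\bm\alpha,\bm\beta)=W(\bm\alpha,\bm\beta)\big/\big\langle (I-d)\,\mathbb C[I]\,w_{\bm\alpha,\bm\beta}\big\rangle$ is an irreducible $\mathfrak{gl}(2\ell,\mathbb C)$-module, where $\langle S\rangle$ denotes the $\mathfrak{gl}(2\ell,\mathbb C)$-submodule generated by $S$.
   Context: $\mathcal A_{2\ell}$ is the complex Weyl algebra generated by $a_i,a_i^*$, $i=1,\dots,2\ell$, with $[a_i,a_j]=[a_i^*,a_j^*]=0$, $[a_i,a_j^*]=\delta_{i,j}$; normal ordering $:xy:=\tfrac12(xy+yx)$. For $\bm\alpha=(\alpha_1,\dots,\alpha_\ell)$, $\bm\beta=(\beta_1,\dots,\beta_\ell)\in\mathbb C^\ell$, $W(\bm\alpha,\bm\beta)=\mathcal A_{2\ell}/I_\ell(\bm\alpha,\bm\beta)$, where $I_\ell(\bm\alpha,\bm\beta)$ is the left ideal generated by $a_i-\alpha_i$ and $a^*_{\ell+i}-\beta_i$ ($i=1,\dots,\ell$); $w_{\bm\alpha,\bm\beta}$ is the image of $1$. $\mathfrak{gl}(2\ell,\mathbb C)$, with matrix units $e_{i,j}$, acts on $\mathcal A_{2\ell}$-modules through the Lie homomorphism $e_{i,j}\mapsto\,:a_ia_j^*:$. $I=\sum_{i=1}^{2\ell}:a_ia_i^*:$ is the action of the central element $\sum_{i=1}^{2\ell}e_{i,i}$,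 and $\mathbb C[I]w_{\bm\alpha,\bm\beta}=\operatorname{span}\{I^kw_{\bm\alpha,\bm\beta}:k\ge0\}$. *)

theory Defs
  imports Main "HOL.Complex"
begin

text \<open>
Vectors are polynomials in the variables
z_1,...,z_{2l} with complex coefficients, represented by their coefficient
function on exponent vectors (finitely supported, only variables 1..2l used).
The Weyl algebra generators act by
  a_j  = d/dz_j + alpha_j,   a*_j = z_j                     (1 <= j <= l)
  a_j  = z_j,                a*_j = - d/dz_j + beta_{j-l}   (l < j <= 2l)
and w = 1.  This is the standard PBW identification
W(alpha,beta) = A_{2l}/I_l(alpha,beta) with
C[a*_1..a*_l, a_{l+1}..a_{2l}] w_{alpha,beta}.
\<close>

type_synonym vec = "(nat \<Rightarrow> nat) \<Rightarrow> complex"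

definition Xop :: "nat \<Rightarrow> vec \<Rightarrow> vec" where
  "Xop j p = (\<lambda>m. if 0 < m j then p (m(j := m j - 1)) else 0)"

definition Dop :: "nat \<Rightarrow> vec \<Rightarrow> vec" where
  "Dop j p = (\<lambda>m. of_nat (m j + 1) * p (m(j := m j + 1)))"

definition aop :: "nat \<Rightarrow> (nat \<Rightarrow> complex) \<Rightarrow> nat \<Rightarrow> vec \<Rightarrow> vec" where
  "aop l \<alpha> j p = (if j \<le> l then (\<lambda>m. Dop j p m + \<alpha> j * p m) else Xop j p)"

definition asop :: "nat \<Rightarrow> (nat \<Rightarrow> complex) \<Rightarrow> nat \<Rightarrow> vec \<Rightarrow> vec" where
  "asop l \<beta> j p = (if j \<le> l then Xop j p else (\<lambda>m. - Dop j p m + \<beta> (j - l) * p m))"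

definition Wcar :: "nat \<Rightarrow> vec set" where
  "Wcar l = {p. finite {m. p m \<noteq> 0} \<and>
                (\<forall>m. p m \<noteq> 0 \<longrightarrow> (\<forall>k. k \<notin> {1..2*l} \<longrightarrow> m k = 0))}"

definition wvec :: vec where
  "wvec = (\<lambda>m. if m = (\<lambda>_. 0) then 1 else 0)"

text \<open>Action of e_{i,j}: the normally ordered product :a_i a*_j:.\<close>
definition Eop :: "nat \<Rightarrow> (nat \<Rightarrow> complex) \<Rightarrow> (nat \<Rightarrow> complex) \<Rightarrow> nat \<Rightarrow> nat \<Rightarrow> vec \<Rightarrow> vec" where
  "Eop l \<alpha> \<beta> i j p =
     (\<lambda>m. (aop l \<alpha> i (asop l \<beta> j p) m + asop l \<beta> j (aop l \<alpha> i p) m) / 2)"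

definition Iop :: "nat \<Rightarrow> (nat \<Rightarrow> complex) \<Rightarrow> (nat \<Rightarrow> complex) \<Rightarrow> vec \<Rightarrow> vec" where
  "Iop l \<alpha> \<beta> p = (\<lambda>m. \<Sum>i\<in>{1..2*l}. Eop l \<alpha> \<beta> i i p m)"

definition gl_submodule :: "nat \<Rightarrow> (nat \<Rightarrow> complex) \<Rightarrow> (nat \<Rightarrow> complex) \<Rightarrow> vec set \<Rightarrow> bool" where
  "gl_submodule l \<alpha> \<beta> M \<longleftrightarrow>
     M \<subseteq> Wcar l \<and> (\<lambda>_. 0) \<in> M \<and>
     (\<forall>p\<in>M. \<forall>q\<in>M. (\<lambda>m. p m + q m) \<in> M) \<and>
     (\<forall>c. \<forall>p\<in>M. (\<lambda>m. c * p m) \<in> M) \<and>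
     (\<forall>i\<in>{1..2*l}. \<forall>j\<in>{1..2*l}. \<forall>p\<in>M. Eop l \<alpha> \<beta> i j p \<in> M)"

definition gen_submodule :: "nat \<Rightarrow> (nat \<Rightarrow> complex) \<Rightarrow> (nat \<Rightarrow> complex) \<Rightarrow> vec set \<Rightarrow> vec set" where
  "gen_submodule l \<alpha> \<beta> S = \<Inter>{M. gl_submodule l \<alpha> \<beta> M \<and> S \<subseteq> M}"

definition CIw :: "nat \<Rightarrow> (nat \<Rightarrow> complex) \<Rightarrow> (nat \<Rightarrow> complex) \<Rightarrow> vec set" where
  "CIw l \<alpha> \<beta> = {(\<lambda>m. \<Sum>k<n. c k * (Iop l \<alpha> \<beta> ^^ k) wvec m) | n c. True}"

definition Nsub :: "nat \<Rightarrow> complex \<Rightarrow> (nat \<Rightarrow> complex) \<Rightarrow> (nat \<Rightarrow> complex) \<Rightarrow> vec set" where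
  "Nsub l d \<alpha> \<beta> = gen_submodule l \<alpha> \<beta>
      {(\<lambda>m. Iop l \<alpha> \<beta> v m - d * v m) | v. v \<in> CIw l \<alpha> \<beta>}"

text \<open>Irreducibility of the quotient W/N as gl(2l,C)-module: it is nonzero and its
  only submodules are 0 and itself; submodules of W/N are exactly M/N for
  submodules M of W containing N.\<close>
definition irreducible_quotient :: "nat \<Rightarrow> (nat \<Rightarrow> complex) \<Rightarrow> (nat \<Rightarrow> complex) \<Rightarrow> vec set \<Rightarrow> bool" where
  "irreducible_quotient l \<alpha> \<beta> N \<longleftrightarrow>
     N \<noteq> Wcar l \<and>
     (\<forall>M. gl_submodule l \<alpha> \<beta> M \<and> N \<subseteq> M \<longrightarrow> M = N \<or> M = Wcar l)"

end

theory Submission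
  imports Defs
begin


lemma X_X: "Xop i (Xop j p) = Xop j (Xop i p)"
  by (rule ext) (auto simp: Xop_def fun_upd_twist)

lemma D_D: "Dop i (Dop j p) = Dop j (Dop i p)"
  by (rule ext) (auto simp: Dop_def fun_upd_twist)

lemma D_X: "Dop i (Xop j p) = (\<lambda>m. Xop j (Dop i p) m + (if i = j then p m else 0))"
  by (rule ext) (auto simp: Dop_def Xop_def fun_upd_twist algebra_simps of_nat_diff fun_upd_idem)

definition linop :: "(vec \<Rightarrow> vec) \<Rightarrow> bool" where
  "linop T \<longleftrightarrow> (\<forall>a b p q. T (\<lambda>m. a * p m + b * q m) = (\<lambda>m. a * T p m + b * T q m))"

lemma linop_X: "linop (Xop j)"
  unfolding linop_def by (auto simp: Xop_def)

lemma linop_D: "linop (Dop j)"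
  unfolding linop_def by (auto simp: Dop_def algebra_simps)

lemma linopD: "linop T \<Longrightarrow> T (\<lambda>m. a * p m + b * q m) = (\<lambda>m. a * T p m + b * T q m)"
  unfolding linop_def by blast

lemma linop_zero: "linop T \<Longrightarrow> T (\<lambda>_. 0) = (\<lambda>_. 0)"
proof -
  assume "linop T"
  from linopD[OF this, of 0 "\<lambda>_. 0" 0 "\<lambda>_. 0"] show ?thesis by simp
qed

lemma linop_add: "linop T \<Longrightarrow> T (\<lambda>m. p m + q m) = (\<lambda>m. T p m + T q m)"
  using linopD[of T 1 p 1 q] by simp

lemma linop_scale: "linop T \<Longrightarrow> T (\<lambda>m. a * p m) = (\<lambda>m. a * T p m)"
  using linopD[of T a p 0 p] by simp

lemma linop_diff: "linop T \<Longrightarrow> T (\<lambda>m. p m - q m) = (\<lambda>m. T p m - T q m)"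
  using linopD[of T 1 p "-1" q] by simp

lemma linop_div: "linop T \<Longrightarrow> T (\<lambda>m. p m / a) = (\<lambda>m. T p m / a)"
  using linop_scale[of T "inverse a" p] by (simp add: field_simps)

lemma linop_sum: "linop T \<Longrightarrow> T (\<lambda>m. \<Sum>k\<in>K. f k m) = (\<lambda>m. \<Sum>k\<in>K. T (f k) m)"
proof (induction K rule: infinite_finite_induct)
  case (infinite A) then show ?case by (simp add: linop_zero)
next
  case empty then show ?case by (simp add: linop_zero)
next
  case (insert x F)
  then show ?case using linop_add[OF insert.prems, of "f x" "\<lambda>m. \<Sum>k\<in>F. f k m"] by simp
qed

lemma linop_if: "linop T \<Longrightarrow> T (\<lambda>m. if c then p m else 0) = (\<lambda>m. if c then T p m else 0)"
  by (cases c) (simp_all add: linop_zero)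

lemma linop_aop: "linop (aop l \<alpha> i)"
  unfolding linop_def aop_def by (auto simp: linopD[OF linop_D] linopD[OF linop_X] algebra_simps)

lemma linop_asop: "linop (asop l \<beta> i)"
  unfolding linop_def asop_def by (auto simp: linopD[OF linop_D] linopD[OF linop_X] algebra_simps)

lemma X_mr[simp]: "Xop j (\<lambda>m. p m * c) m' = Xop j p m' * c"
  by (simp add: Xop_def)
lemma D_mr[simp]: "Dop j (\<lambda>m. p m * c) m' = Dop j p m' * c"
  by (simp add: Dop_def)

lemma A_A: "aop l \<alpha> i (aop l \<alpha> k p) = aop l \<alpha> k (aop l \<alpha> i p)"
  by (auto simp: aop_def linop_add[OF linop_D] linop_scale[OF linop_D]
      linop_add[OF linop_X] linop_scale[OF linop_X] D_D X_X D_X algebra_simps intro!: ext)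

lemma B_B: "asop l \<beta> i (asop l \<beta> k p) = asop l \<beta> k (asop l \<beta> i p)"
  by (auto simp: asop_def linop_add[OF linop_D] linop_scale[OF linop_D] linop_diff[OF linop_D]
      linop_add[OF linop_X] linop_scale[OF linop_X] linop_diff[OF linop_X] D_D X_X D_X algebra_simps intro!: ext)

lemma A_B: "aop l \<alpha> i (asop l \<beta> k p) = (\<lambda>m. asop l \<beta> k (aop l \<alpha> i p) m + (if i = k then p m else 0))"
  by (auto simp: aop_def asop_def linop_add[OF linop_D] linop_scale[OF linop_D] linop_diff[OF linop_D]
      linop_add[OF linop_X] linop_scale[OF linop_X] linop_diff[OF linop_X] D_D X_X D_X algebra_simps intro!: ext)

lemmas lin_simps = linop_add[OF linop_aop] linop_if[OF linop_aop] linop_div[OF linop_aop]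
  linop_add[OF linop_asop] linop_if[OF linop_asop] linop_div[OF linop_asop]
  linop_diff[OF linop_aop] linop_diff[OF linop_asop]
  linop_scale[OF linop_aop] linop_scale[OF linop_asop]
  linop_sum[OF linop_aop] linop_sum[OF linop_asop]

lemma Eop_alt: "Eop l \<alpha> \<beta> i j p = (\<lambda>m. asop l \<beta> j (aop l \<alpha> i p) m + (if i = j then p m / 2 else 0))"
  by (auto simp: Eop_def A_B field_simps intro!: ext)

lemma linop_Eop: "linop (Eop l \<alpha> \<beta> i j)"
  unfolding linop_def Eop_alt by (auto simp: linopD[OF linop_aop] linopD[OF linop_asop] algebra_simps)

lemma linop_Iop: "linop (Iop l \<alpha> \<beta>)"
  unfolding linop_def Iop_def by (auto simp: linopD[OF linop_Eop] algebra_simps sum.distrib sum_distrib_left)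

lemma E_comm: "Eop l \<alpha> \<beta> i j (Eop l \<alpha> \<beta> k r p) m - Eop l \<alpha> \<beta> k r (Eop l \<alpha> \<beta> i j p) m
   = (if i = r then asop l \<beta> j (aop l \<alpha> k p) m else 0) - (if k = j then asop l \<beta> r (aop l \<alpha> i p) m else 0)"
  by (auto simp: Eop_alt lin_simps A_B A_A B_B field_simps)

lemma I_comm:
  assumes "i \<in> {1..2*l}" "j \<in> {1..2*l}"
  shows "Eop l \<alpha> \<beta> i j (Iop l \<alpha> \<beta> p) = Iop l \<alpha> \<beta> (Eop l \<alpha> \<beta> i j p)"
proof (rule ext)
  fix m
  let ?K = "{1..2*l}"
  have 1: "Eop l \<alpha> \<beta> i j (Iop l \<alpha> \<beta> p) m = (\<Sum>k\<in>?K. Eop l \<alpha> \<beta> i j (Eop l \<alpha> \<beta> k k p) m)"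
    unfolding Iop_def by (simp add: linop_sum[OF linop_Eop])
  have 2: "Iop l \<alpha> \<beta> (Eop l \<alpha> \<beta> i j p) m = (\<Sum>k\<in>?K. Eop l \<alpha> \<beta> k k (Eop l \<alpha> \<beta> i j p) m)"
    unfolding Iop_def by simp
  have "(\<Sum>k\<in>?K. Eop l \<alpha> \<beta> i j (Eop l \<alpha> \<beta> k k p) m) - (\<Sum>k\<in>?K. Eop l \<alpha> \<beta> k k (Eop l \<alpha> \<beta> i j p) m)
     = (\<Sum>k\<in>?K. (if i = k then asop l \<beta> j (aop l \<alpha> k p) m else 0) - (if k = j then asop l \<beta> k (aop l \<alpha> i p) m else 0))"
    by (simp add: sum_subtractf[symmetric] E_comm)
  also have "\<dots> = 0" using assms by (simp add: sum_subtractf)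
  finally show "Eop l \<alpha> \<beta> i j (Iop l \<alpha> \<beta> p) m = Iop l \<alpha> \<beta> (Eop l \<alpha> \<beta> i j p) m"
    using 1 2 by simp
qed

lemma XD_same: "Xop i (Dop i p) m = of_nat (m i) * p m"
  by (auto simp: Xop_def Dop_def fun_upd_idem)

lemma E1: "i \<le> l \<Longrightarrow> j \<le> l \<Longrightarrow>
  Eop l \<alpha> \<beta> i j p m = Xop j (Dop i p) m + (if i = j then p m / 2 else 0) + \<alpha> i * Xop j p m"
  by (simp add: Eop_alt aop_def asop_def linop_add[OF linop_X] linop_scale[OF linop_X])

lemma E2: "\<not> i \<le> l \<Longrightarrow> \<not> j \<le> l \<Longrightarrow>
  Eop l \<alpha> \<beta> i j p m = - Xop i (Dop j p) m - (if i = j then p m / 2 else 0) + \<beta> (j - l) * Xop i p m"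
  by (simp add: Eop_alt aop_def asop_def linop_add[OF linop_D] linop_scale[OF linop_D] D_X)

lemma E3: "i \<le> l \<Longrightarrow> \<not> j \<le> l \<Longrightarrow>
  Eop l \<alpha> \<beta> i j p m = - Dop j (Dop i p) m + \<beta> (j - l) * Dop i p m - \<alpha> i * Dop j p m
     + \<alpha> i * \<beta> (j - l) * p m"
  by (simp add: Eop_alt aop_def asop_def linop_add[OF linop_D] linop_scale[OF linop_D] algebra_simps)

definition cc :: "nat \<Rightarrow> nat \<Rightarrow> (nat \<Rightarrow> nat) \<Rightarrow> complex" where
  "cc l i m = (if i \<le> l then of_nat (m i) + 1/2 else - (of_nat (m i) + 1/2))"
definition gam :: "nat \<Rightarrow> (nat \<Rightarrow> complex) \<Rightarrow> (nat \<Rightarrow> complex) \<Rightarrow> nat \<Rightarrow> complex" where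
  "gam l \<alpha> \<beta> i = (if i \<le> l then \<alpha> i else \<beta> (i - l))"

lemma Eii: "Eop l \<alpha> \<beta> i i p m = cc l i m * p m + gam l \<alpha> \<beta> i * Xop i p m"
  by (cases "i \<le> l") (simp_all add: E1 E2 XD_same cc_def gam_def algebra_simps)

lemma Iop_formula: "Iop l \<alpha> \<beta> p m = (\<Sum>i\<in>{1..2*l}. cc l i m * p m + gam l \<alpha> \<beta> i * Xop i p m)"
  by (simp add: Iop_def Eii)

lemma Iop_single:
  assumes "i0 \<in> {1..2*l}" "p m = 0" "\<And>j. j \<in> {1..2*l} \<Longrightarrow> j \<noteq> i0 \<Longrightarrow> Xop j p m = 0"
  shows "Iop l \<alpha> \<beta> p m = gam l \<alpha> \<beta> i0 * Xop i0 p m"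
proof -
  have "Iop l \<alpha> \<beta> p m = (\<Sum>i\<in>{1..2*l}. if i = i0 then gam l \<alpha> \<beta> i0 * Xop i0 p m else 0)"
    unfolding Iop_formula using assms by (intro sum.cong) auto
  also have "\<dots> = gam l \<alpha> \<beta> i0 * Xop i0 p m" using assms(1) by simp
  finally show ?thesis .
qed

lemma WcarI: "finite {m. p m \<noteq> 0} \<Longrightarrow> (\<And>m k. p m \<noteq> 0 \<Longrightarrow> k \<notin> {1..2*l} \<Longrightarrow> m k = 0) \<Longrightarrow> p \<in> Wcar l"
  unfolding Wcar_def by blast

lemma WcarD: "p \<in> Wcar l \<Longrightarrow> finite {m. p m \<noteq> 0}"
  "p \<in> Wcar l \<Longrightarrow> p m \<noteq> 0 \<Longrightarrow> k \<notin> {1..2*l} \<Longrightarrow> m k = 0"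
  unfolding Wcar_def by blast+

lemma Wcar_lin: "p \<in> Wcar l \<Longrightarrow> q \<in> Wcar l \<Longrightarrow> (\<lambda>m. a * p m + b * q m) \<in> Wcar l"
proof (rule WcarI)
  assume p: "p \<in> Wcar l" and q: "q \<in> Wcar l"
  show "finite {m. a * p m + b * q m \<noteq> 0}"
    by (rule finite_subset[of _ "{m. p m \<noteq> 0} \<union> {m. q m \<noteq> 0}"]) (auto simp: WcarD[OF p] WcarD[OF q])
  fix m k assume "a * p m + b * q m \<noteq> 0" "k \<notin> {1..2 * l}"
  then have "p m \<noteq> 0 \<or> q m \<noteq> 0" by auto
  then show "m k = 0" using WcarD(2)[OF p] WcarD(2)[OF q] \<open>k \<notin> _\<close> by blast
qed

lemma Wcar_zero: "(\<lambda>_. 0) \<in> Wcar l"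
  by (rule WcarI) auto

lemma Wcar_add: "p \<in> Wcar l \<Longrightarrow> q \<in> Wcar l \<Longrightarrow> (\<lambda>m. p m + q m) \<in> Wcar l"
  using Wcar_lin[of p l q 1 1] by simp
lemma Wcar_scale: "p \<in> Wcar l \<Longrightarrow> (\<lambda>m. a * p m) \<in> Wcar l"
  using Wcar_lin[of p l p a 0] by simp

lemma Wcar_sum: "(\<And>k. k \<in> K \<Longrightarrow> f k \<in> Wcar l) \<Longrightarrow> (\<lambda>m. \<Sum>k\<in>K. f k m) \<in> Wcar l"
proof (induction K rule: infinite_finite_induct)
  case (infinite A) then show ?case by (simp add: Wcar_zero)
next
  case empty then show ?case by (simp add: Wcar_zero)
next
  case (insert x F) then show ?case using Wcar_add[of "f x" l "\<lambda>m. \<Sum>k\<in>F. f k m"] by simp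
qed

lemma Wcar_X: assumes "p \<in> Wcar l" "j \<in> {1..2*l}" shows "Xop j p \<in> Wcar l"
proof (rule WcarI)
  have "{m. Xop j p m \<noteq> 0} \<subseteq> (\<lambda>m. m(j := m j + 1)) ` {m. p m \<noteq> 0}"
  proof
    fix m assume "m \<in> {m. Xop j p m \<noteq> 0}"
    then have "0 < m j" "p (m(j := m j - 1)) \<noteq> 0" by (auto simp: Xop_def split: if_splits)
    then show "m \<in> (\<lambda>m. m(j := m j + 1)) ` {m. p m \<noteq> 0}"
      by (intro rev_image_eqI[of "m(j := m j - 1)"]) auto
  qed
  then show "finite {m. Xop j p m \<noteq> 0}" using WcarD(1)[OF assms(1)] finite_surj by blast
  fix m k assume "Xop j p m \<noteq> 0" "k \<notin> {1..2*l}"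
  then show "m k = 0" using WcarD(2)[OF assms(1), of "m(j := m j - 1)" k] assms(2)
    by (auto simp: Xop_def split: if_splits)
qed

lemma Wcar_D: assumes "p \<in> Wcar l" "j \<in> {1..2*l}" shows "Dop j p \<in> Wcar l"
proof (rule WcarI)
  have "{m. Dop j p m \<noteq> 0} \<subseteq> (\<lambda>m. m(j := m j - 1)) ` {m. p m \<noteq> 0}"
  proof
    fix m assume "m \<in> {m. Dop j p m \<noteq> 0}"
    then have "p (m(j := m j + 1)) \<noteq> 0" by (auto simp: Dop_def)
    then show "m \<in> (\<lambda>m. m(j := m j - 1)) ` {m. p m \<noteq> 0}"
      by (intro rev_image_eqI[of "m(j := m j + 1)"]) auto
  qed
  then show "finite {m. Dop j p m \<noteq> 0}" using WcarD(1)[OF assms(1)] finite_surj by blast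
  fix m k assume "Dop j p m \<noteq> 0" "k \<notin> {1..2*l}"
  then show "m k = 0" using WcarD(2)[OF assms(1), of "m(j := m j + 1)" k] assms(2)
    by (auto simp: Dop_def split: if_splits)
qed

lemma Wcar_A: "p \<in> Wcar l \<Longrightarrow> j \<in> {1..2*l} \<Longrightarrow> aop l \<alpha> j p \<in> Wcar l"
  unfolding aop_def using Wcar_lin[of "Dop j p" l p 1 "\<alpha> j"] by (auto simp: Wcar_D Wcar_X)

lemma Wcar_B: "p \<in> Wcar l \<Longrightarrow> j \<in> {1..2*l} \<Longrightarrow> asop l \<beta> j p \<in> Wcar l"
  unfolding asop_def using Wcar_lin[of "Dop j p" l p "-1" "\<beta> (j - l)"] by (auto simp: Wcar_D Wcar_X)

lemma Wcar_E: "p \<in> Wcar l \<Longrightarrow> i \<in> {1..2*l} \<Longrightarrow> j \<in> {1..2*l} \<Longrightarrow> Eop l \<alpha> \<beta> i j p \<in> Wcar l"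
  unfolding Eop_def using Wcar_lin[of "aop l \<alpha> i (asop l \<beta> j p)" l "asop l \<beta> j (aop l \<alpha> i p)" "1/2" "1/2"]
  by (auto simp: Wcar_A Wcar_B add_divide_distrib)

lemma Wcar_I: "p \<in> Wcar l \<Longrightarrow> Iop l \<alpha> \<beta> p \<in> Wcar l"
  unfolding Iop_def by (rule Wcar_sum) (auto simp: Wcar_E)

lemma Wcar_wvec: "wvec \<in> Wcar l"
  by (rule WcarI) (auto simp: wvec_def split: if_splits)


lemma sm_Wcar: "gl_submodule l \<alpha> \<beta> M \<Longrightarrow> p \<in> M \<Longrightarrow> p \<in> Wcar l"
  unfolding gl_submodule_def by blast

lemma sm_lin: assumes "gl_submodule l \<alpha> \<beta> M" "p \<in> M" "q \<in> M"
  shows "(\<lambda>m. a * p m + b * q m) \<in> M"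
proof -
  have h1: "(\<lambda>m. a * p m) \<in> M" and h2: "(\<lambda>m. b * q m) \<in> M" using assms unfolding gl_submodule_def by blast+
  have ad: "\<forall>p\<in>M. \<forall>q\<in>M. (\<lambda>m. p m + q m) \<in> M" using assms(1) unfolding gl_submodule_def by blast
  show ?thesis using bspec[OF bspec[OF ad h1] h2] by simp
qed

lemma sm_zero: "gl_submodule l \<alpha> \<beta> M \<Longrightarrow> (\<lambda>_. 0) \<in> M"
  unfolding gl_submodule_def by blast

lemma sm_E: "gl_submodule l \<alpha> \<beta> M \<Longrightarrow> p \<in> M \<Longrightarrow> i \<in> {1..2*l} \<Longrightarrow> j \<in> {1..2*l} \<Longrightarrow> Eop l \<alpha> \<beta> i j p \<in> M"
  unfolding gl_submodule_def by blast

lemma sm_scale: "gl_submodule l \<alpha> \<beta> M \<Longrightarrow> p \<in> M \<Longrightarrow> (\<lambda>m. a * p m) \<in> M"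
  using sm_lin[of l \<alpha> \<beta> M p p a 0] by simp

lemma sm_sum: assumes "gl_submodule l \<alpha> \<beta> M" shows "(\<And>k. k \<in> K \<Longrightarrow> f k \<in> M) \<Longrightarrow> (\<lambda>m. \<Sum>k\<in>K. f k m) \<in> M"
proof (induction K rule: infinite_finite_induct)
  case (infinite A) then show ?case by (simp add: sm_zero[OF assms])
next
  case empty then show ?case by (simp add: sm_zero[OF assms])
next
  case (insert x F) then show ?case using sm_lin[OF assms, of "f x" "\<lambda>m. \<Sum>k\<in>F. f k m" 1 1] by simp
qed

definition monom :: "(nat \<Rightarrow> nat) \<Rightarrow> vec" where
  "monom m0 = (\<lambda>m. if m = m0 then 1 else 0)"
definition tdeg :: "nat \<Rightarrow> (nat \<Rightarrow> nat) \<Rightarrow> nat" where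
  "tdeg l m = (\<Sum>k\<in>{1..2*l}. m k)"
definition degle :: "nat \<Rightarrow> nat \<Rightarrow> vec \<Rightarrow> bool" where
  "degle l n p \<longleftrightarrow> (\<forall>m. p m \<noteq> 0 \<longrightarrow> tdeg l m \<le> n)"

lemma tdeg_upd: "j \<in> {1..2*l} \<Longrightarrow> tdeg l (m(j := v)) + m j = tdeg l m + v"
proof -
  assume j: "j \<in> {1..2*l}"
  have "tdeg l (m(j := v)) = (m(j:=v)) j + (\<Sum>k\<in>{1..2*l} - {j}. (m(j:=v)) k)"
    unfolding tdeg_def by (rule sum.remove) (use j in auto)
  also have "\<dots> = v + (\<Sum>k\<in>{1..2*l} - {j}. m k)"
  proof -
    have "(\<Sum>k\<in>{1..2*l} - {j}. (m(j:=v)) k) = (\<Sum>k\<in>{1..2*l} - {j}. m k)" by (rule sum.cong) auto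
    then show ?thesis by simp
  qed
  finally have "tdeg l (m(j := v)) = v + (\<Sum>k\<in>{1..2*l} - {j}. m k)" .
  moreover have "tdeg l m = m j + (\<Sum>k\<in>{1..2*l} - {j}. m k)"
    unfolding tdeg_def by (rule sum.remove) (use j in auto)
  ultimately show ?thesis by simp
qed

lemma decomp: "p \<in> Wcar l \<Longrightarrow> p = (\<lambda>m'. \<Sum>m\<in>{m. p m \<noteq> 0}. p m * monom m m')"
proof (rule ext)
  fix m' assume "p \<in> Wcar l"
  have "(\<Sum>m\<in>{m. p m \<noteq> 0}. p m * monom m m') = (\<Sum>m\<in>{m. p m \<noteq> 0}. if m = m' then p m else 0)"
    by (rule sum.cong) (auto simp: monom_def)
  also have "\<dots> = p m'" using sum.delta[OF WcarD(1)[OF \<open>p \<in> Wcar l\<close>], of m' p] by auto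
  finally show "p m' = (\<Sum>m\<in>{m. p m \<noteq> 0}. p m * monom m m')" by simp
qed

lemma mono_Wcar: "(\<And>k. k \<notin> {1..2*l} \<Longrightarrow> m k = 0) \<Longrightarrow> monom m \<in> Wcar l"
  by (rule WcarI) (auto simp: monom_def split: if_splits)

lemma mono_degle: "tdeg l m \<le> n \<Longrightarrow> degle l n (monom m)"
  by (auto simp: degle_def monom_def split: if_splits)

lemma degle_Wcar: "p \<in> Wcar l \<Longrightarrow> \<exists>n. degle l n p"
proof -
  assume "p \<in> Wcar l"
  then have "finite (tdeg l ` {m. p m \<noteq> 0})" using WcarD(1) by blast
  then obtain n where "\<forall>x\<in>tdeg l ` {m. p m \<noteq> 0}. x \<le> n" using finite_nat_set_iff_bounded_le by blast
  then show ?thesis unfolding degle_def by blast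
qed

lemma degle_XD: assumes "degle l n p" "i \<in> {1..2*l}" "j \<in> {1..2*l}" shows "degle l n (Xop j (Dop i p))"
  unfolding degle_def
proof (intro allI impI)
  fix m assume "Xop j (Dop i p) m \<noteq> 0"
  then have 1: "0 < m j" and 2: "p (m(j := m j - 1, i := (m(j := m j - 1)) i + 1)) \<noteq> 0"
    by (auto simp: Xop_def Dop_def split: if_splits)
  have "tdeg l (m(j := m j - 1, i := (m(j := m j - 1)) i + 1)) \<le> n" using assms(1) 2 unfolding degle_def by blast
  moreover have "tdeg l (m(j := m j - 1, i := (m(j := m j - 1)) i + 1)) + (m(j := m j - 1)) i = tdeg l (m(j := m j - 1)) + ((m(j := m j - 1)) i + 1)"
    by (rule tdeg_upd[OF assms(2)])
  moreover have "tdeg l (m(j := m j - 1)) + m j = tdeg l m + (m j - 1)" by (rule tdeg_upd[OF assms(3)])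
  ultimately show "tdeg l m \<le> n" using 1 by linarith
qed

lemma degle_D: assumes "degle l n p" "j \<in> {1..2*l}" "Dop j p m \<noteq> 0" shows "tdeg l m < n"
proof -
  have "p (m(j := m j + 1)) \<noteq> 0" using assms(3) by (auto simp: Dop_def)
  then have "tdeg l (m(j := m j + 1)) \<le> n" using assms(1) unfolding degle_def by blast
  moreover have "tdeg l (m(j := m j + 1)) + m j = tdeg l m + (m j + 1)" by (rule tdeg_upd[OF assms(2)])
  ultimately show ?thesis by linarith
qed

lemma degle_D': "degle l n p \<Longrightarrow> j \<in> {1..2*l} \<Longrightarrow> degle l (n - 1) (Dop j p)"
  unfolding degle_def
proof (intro allI impI)
  fix m assume "\<forall>m. p m \<noteq> 0 \<longrightarrow> tdeg l m \<le> n" "j \<in> {1..2*l}" "Dop j p m \<noteq> 0"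
  then have "tdeg l m < n" using degle_D[of l n p j m] unfolding degle_def by blast
  then show "tdeg l m \<le> n - 1" by linarith
qed




lemma mono_X: assumes "0 < m j" shows "Xop j (monom (m(j := m j - 1))) = monom m"
proof (rule ext)
  fix m'
  show "Xop j (monom (m(j := m j - 1))) m' = monom m m'"
  proof (cases "m' = m")
    case True then show ?thesis using assms by (simp add: Xop_def monom_def)
  next
    case False
    have "\<not> (0 < m' j \<and> m'(j := m' j - 1) = m(j := m j - 1))"
    proof
      assume h: "0 < m' j \<and> m'(j := m' j - 1) = m(j := m j - 1)"
      have "m' = m"
      proof (rule ext)
        fix k
        have "(m'(j := m' j - 1)) k = (m(j := m j - 1)) k" using h by simp
        then show "m' k = m k" using h assms by (cases "k = j") auto
      qed
      then show False using False by simp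
    qed
    then show ?thesis using False by (auto simp: Xop_def monom_def)
  qed
qed

lemma sm_lin3: "gl_submodule l \<alpha> \<beta> M \<Longrightarrow> p \<in> M \<Longrightarrow> q \<in> M \<Longrightarrow> r \<in> M \<Longrightarrow> (\<lambda>m. a * p m + b * q m + c * r m) \<in> M"
  using sm_lin[of l \<alpha> \<beta> M "\<lambda>m. a * p m + b * q m" r 1 c] sm_lin[of l \<alpha> \<beta> M p q a b] by simp

lemma X_in_M:
  assumes M: "gl_submodule l \<alpha> \<beta> M" and P: "\<forall>q\<in>Wcar l. degle l n q \<longrightarrow> q \<in> M"
    and i0: "i0 \<in> {1..l}" "\<alpha> i0 \<noteq> 0" and j0: "j0 \<in> {l+1..2*l}" "\<beta> (j0 - l) \<noteq> 0"
    and p: "p \<in> Wcar l" "degle l n p" and j: "j \<in> {1..2*l}"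
  shows "Xop j p \<in> M"
proof -
  have pM: "p \<in> M" using P p by blast
  show ?thesis
  proof (cases "j \<le> l")
    case True
    have i0r: "i0 \<in> {1..2*l}" using i0 by auto
    have xd: "Xop j (Dop i0 p) \<in> M" using P Wcar_X[OF Wcar_D[OF p(1) i0r] j] degle_XD[OF p(2) i0r j] by blast
    have e: "Eop l \<alpha> \<beta> i0 j p \<in> M" using sm_E[OF M pM i0r j] .
    define c where "c = (if i0 = j then 1/2 else (0::complex))"
    have eq: "Xop j p = (\<lambda>m. (1 / \<alpha> i0) * Eop l \<alpha> \<beta> i0 j p m + (- 1 / \<alpha> i0) * Xop j (Dop i0 p) m + (- c / \<alpha> i0) * p m)"
      using i0 True by (auto simp: E1 c_def field_simps intro!: ext)
    show ?thesis unfolding eq by (rule sm_lin3[OF M e xd pM])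
  next
    case False
    have j0r: "j0 \<in> {1..2*l}" using j0 by auto
    have xd: "Xop j (Dop j0 p) \<in> M" using P Wcar_X[OF Wcar_D[OF p(1) j0r] j] degle_XD[OF p(2) j0r j] by blast
    have e: "Eop l \<alpha> \<beta> j j0 p \<in> M" using sm_E[OF M pM j j0r] .
    define c where "c = (if j = j0 then 1/2 else (0::complex))"
    have eq: "Xop j p = (\<lambda>m. (1 / \<beta> (j0 - l)) * Eop l \<alpha> \<beta> j j0 p m + (1 / \<beta> (j0 - l)) * Xop j (Dop j0 p) m + (c / \<beta> (j0 - l)) * p m)"
      using j0 False by (auto simp: E2 c_def field_simps intro!: ext)
    show ?thesis unfolding eq by (rule sm_lin3[OF M e xd pM])
  qed
qed

lemma P_from:
  assumes M: "gl_submodule l \<alpha> \<beta> M"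
    and H: "\<And>m. (\<And>k. k \<notin> {1..2*l} \<Longrightarrow> m k = 0) \<Longrightarrow> tdeg l m \<le> n \<Longrightarrow> monom m \<in> M"
  shows "\<forall>q\<in>Wcar l. degle l n q \<longrightarrow> q \<in> M"
proof (intro ballI impI)
  fix q assume q: "q \<in> Wcar l" "degle l n q"
  have "(\<lambda>m'. \<Sum>m\<in>{m. q m \<noteq> 0}. (\<lambda>m''. q m * monom m m'') m') \<in> M"
  proof (rule sm_sum[OF M])
    fix m assume "m \<in> {m. q m \<noteq> 0}"
    then have "monom m \<in> M" using H WcarD(2)[OF q(1)] q(2) unfolding degle_def by blast
    then show "(\<lambda>m''. q m * monom m m'') \<in> M" by (rule sm_scale[OF M])
  qed
  then show "q \<in> M" using decomp[OF q(1)] by simp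
qed

lemma gen_all:
  assumes M: "gl_submodule l \<alpha> \<beta> M" and w: "wvec \<in> M"
    and i0: "i0 \<in> {1..l}" "\<alpha> i0 \<noteq> 0" and j0: "j0 \<in> {l+1..2*l}" "\<beta> (j0 - l) \<noteq> 0"
  shows "Wcar l \<subseteq> M"
proof -
  have mono_in: "\<forall>m. (\<forall>k. k \<notin> {1..2*l} \<longrightarrow> m k = 0) \<longrightarrow> tdeg l m \<le> n \<longrightarrow> monom m \<in> M" for n
  proof (induction n)
    case 0
    show ?case
    proof (intro allI impI)
      fix m assume v: "\<forall>k. k \<notin> {1..2*l} \<longrightarrow> m k = 0" and "tdeg l m \<le> 0"
      then have "\<forall>k\<in>{1..2*l}. m k = 0" unfolding tdeg_def by simp
      then have "m = (\<lambda>_. 0)"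
      proof -
        assume a: "\<forall>k\<in>{1..2*l}. m k = 0"
        show ?thesis
        proof (rule ext)
          fix k show "m k = 0" using a v by (cases "k \<in> {1..2*l}") blast+
        qed
      qed
      then show "monom m \<in> M" using w by (simp add: monom_def wvec_def)
    qed
  next
    case (Suc n)
    have P: "\<forall>q\<in>Wcar l. degle l n q \<longrightarrow> q \<in> M" by (rule P_from[OF M]) (use Suc.IH in blast)
    show ?case
    proof (intro allI impI)
      fix m assume v: "\<forall>k. k \<notin> {1..2*l} \<longrightarrow> m k = 0" and t: "tdeg l m \<le> Suc n"
      show "monom m \<in> M"
      proof (cases "tdeg l m \<le> n")
        case True then show ?thesis using Suc.IH v by blast
      next
        case False
        then have "tdeg l m \<noteq> 0" by simp
        then obtain j where j: "j \<in> {1..2*l}" "0 < m j" unfolding tdeg_def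
          by (metis neq0_conv sum.neutral)
        let ?m1 = "m(j := m j - 1)"
        have "tdeg l ?m1 + m j = tdeg l m + (m j - 1)" by (rule tdeg_upd[OF j(1)])
        then have t1: "tdeg l ?m1 \<le> n" using t j(2) by linarith
        have v1: "\<And>k. k \<notin> {1..2*l} \<Longrightarrow> ?m1 k = 0" using v j(1) by auto
        have "Xop j (monom ?m1) \<in> M"
          by (rule X_in_M[OF M P i0 j0 mono_Wcar[OF v1] mono_degle[OF t1] j(1)])
        then show ?thesis using mono_X[of m j] j(2) by simp
      qed
    qed
  qed
  show ?thesis
  proof
    fix q assume q: "q \<in> Wcar l"
    obtain n where "degle l n q" using degle_Wcar[OF q] by blast
    moreover have "\<forall>q\<in>Wcar l. degle l n q \<longrightarrow> q \<in> M" by (rule P_from[OF M]) (use mono_in in blast)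
    ultimately show "q \<in> M" using q by blast
  qed
qed



definition IdD :: "nat \<Rightarrow> complex \<Rightarrow> (nat \<Rightarrow> complex) \<Rightarrow> (nat \<Rightarrow> complex) \<Rightarrow> vec \<Rightarrow> vec" where
  "IdD l d \<alpha> \<beta> r = (\<lambda>m. Iop l \<alpha> \<beta> r m - d * r m)"

definition Rset :: "nat \<Rightarrow> complex \<Rightarrow> (nat \<Rightarrow> complex) \<Rightarrow> (nat \<Rightarrow> complex) \<Rightarrow> vec set" where
  "Rset l d \<alpha> \<beta> = {IdD l d \<alpha> \<beta> r | r. r \<in> Wcar l}"

lemma linop_IdD: "linop (IdD l d \<alpha> \<beta>)"
  unfolding linop_def IdD_def by (auto simp: linopD[OF linop_Iop] algebra_simps)

lemma IdD_E: "i \<in> {1..2*l} \<Longrightarrow> j \<in> {1..2*l} \<Longrightarrow>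
  Eop l \<alpha> \<beta> i j (IdD l d \<alpha> \<beta> r) = IdD l d \<alpha> \<beta> (Eop l \<alpha> \<beta> i j r)"
  unfolding IdD_def by (simp add: linop_diff[OF linop_Eop] linop_scale[OF linop_Eop] I_comm)

lemma Wcar_IdD: "r \<in> Wcar l \<Longrightarrow> IdD l d \<alpha> \<beta> r \<in> Wcar l"
  unfolding IdD_def using Wcar_lin[of "Iop l \<alpha> \<beta> r" l r 1 "-d"] by (simp add: Wcar_I)

lemma R_sub: "gl_submodule l \<alpha> \<beta> (Rset l d \<alpha> \<beta>)"
  unfolding gl_submodule_def
proof (intro conjI ballI allI)
  show "Rset l d \<alpha> \<beta> \<subseteq> Wcar l" unfolding Rset_def using Wcar_IdD by blast
  show "(\<lambda>_. 0) \<in> Rset l d \<alpha> \<beta>" unfolding Rset_def mem_Collect_eq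
    by (rule exI[of _ "\<lambda>_. 0"]) (simp add: linop_zero[OF linop_IdD] Wcar_zero)
  fix p q assume p: "p \<in> Rset l d \<alpha> \<beta>" and q: "q \<in> Rset l d \<alpha> \<beta>"
  then obtain rp rq where rp: "rp \<in> Wcar l" "p = IdD l d \<alpha> \<beta> rp" and rq: "rq \<in> Wcar l" "q = IdD l d \<alpha> \<beta> rq"
    unfolding Rset_def by blast
  have "(\<lambda>m. p m + q m) = IdD l d \<alpha> \<beta> (\<lambda>m. rp m + rq m)" using rp rq by (simp add: linop_add[OF linop_IdD])
  then show "(\<lambda>m. p m + q m) \<in> Rset l d \<alpha> \<beta>" unfolding Rset_def using Wcar_add[OF rp(1) rq(1)] by blast
next
  fix c p assume p: "p \<in> Rset l d \<alpha> \<beta>"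
  then obtain rp where rp: "rp \<in> Wcar l" "p = IdD l d \<alpha> \<beta> rp" unfolding Rset_def by blast
  have "(\<lambda>m. c * p m) = IdD l d \<alpha> \<beta> (\<lambda>m. c * rp m)" using rp by (simp add: linop_scale[OF linop_IdD])
  then show "(\<lambda>m. c * p m) \<in> Rset l d \<alpha> \<beta>" unfolding Rset_def using Wcar_scale[OF rp(1)] by blast
next
  fix i j p assume i: "i \<in> {1..2*l}" and j: "j \<in> {1..2*l}" and p: "p \<in> Rset l d \<alpha> \<beta>"
  then obtain rp where rp: "rp \<in> Wcar l" "p = IdD l d \<alpha> \<beta> rp" unfolding Rset_def by blast
  then show "Eop l \<alpha> \<beta> i j p \<in> Rset l d \<alpha> \<beta>" unfolding Rset_def using IdD_E[OF i j] Wcar_E[OF rp(1) i j] by blast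
qed

lemma Ipow_Wcar: "(Iop l \<alpha> \<beta> ^^ k) wvec \<in> Wcar l"
  by (induction k) (simp_all add: Wcar_wvec Wcar_I)

lemma CIw_Wcar: "v \<in> CIw l \<alpha> \<beta> \<Longrightarrow> v \<in> Wcar l"
  unfolding CIw_def by (auto intro!: Wcar_sum Wcar_scale Ipow_Wcar)

lemma wvec_CIw: "wvec \<in> CIw l \<alpha> \<beta>"
proof -
  have "wvec = (\<lambda>m. \<Sum>k<1. (\<lambda>_. 1) k * (Iop l \<alpha> \<beta> ^^ k) wvec m)" by simp
  then show ?thesis unfolding CIw_def mem_Collect_eq by (intro exI[of _ 1] exI[of _ "\<lambda>_. 1"]) simp
qed

definition Sgen where "Sgen l d \<alpha> \<beta> = {(\<lambda>m. Iop l \<alpha> \<beta> v m - d * v m) | v. v \<in> CIw l \<alpha> \<beta>}"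

lemma S_R: "Sgen l d \<alpha> \<beta> \<subseteq> Rset l d \<alpha> \<beta>"
  unfolding Sgen_def Rset_def IdD_def using CIw_Wcar by blast

lemma Inter_sub: assumes "\<And>M. M \<in> F \<Longrightarrow> gl_submodule l \<alpha> \<beta> M" "F \<noteq> {}"
  shows "gl_submodule l \<alpha> \<beta> (\<Inter>F)"
  unfolding gl_submodule_def
proof (intro conjI ballI allI)
  show "\<Inter>F \<subseteq> Wcar l" using assms unfolding gl_submodule_def by blast
  show "(\<lambda>_. 0) \<in> \<Inter>F" using assms unfolding gl_submodule_def by blast
  fix p q assume "p \<in> \<Inter>F" "q \<in> \<Inter>F"
  then show "(\<lambda>m. p m + q m) \<in> \<Inter>F" using assms unfolding gl_submodule_def by blast
next
  fix c p assume "p \<in> \<Inter>F"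
  then show "(\<lambda>m. c * p m) \<in> \<Inter>F" using assms unfolding gl_submodule_def by blast
next
  fix i j p assume "i \<in> {1..2*l}" "j \<in> {1..2*l}" "p \<in> \<Inter>F"
  then show "Eop l \<alpha> \<beta> i j p \<in> \<Inter>F" using assms unfolding gl_submodule_def by blast
qed

lemma N_sub: "gl_submodule l \<alpha> \<beta> (Nsub l d \<alpha> \<beta>)"
proof -
  let ?F = "{M. gl_submodule l \<alpha> \<beta> M \<and> Sgen l d \<alpha> \<beta> \<subseteq> M}"
  have N: "Nsub l d \<alpha> \<beta> = \<Inter>?F" unfolding Nsub_def gen_submodule_def Sgen_def by simp
  have R: "Rset l d \<alpha> \<beta> \<in> ?F" using R_sub S_R by blast
  show ?thesis unfolding N by (rule Inter_sub) (use R in auto)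
qed

lemma N_R: "Nsub l d \<alpha> \<beta> \<subseteq> Rset l d \<alpha> \<beta>"
  unfolding Nsub_def gen_submodule_def using R_sub S_R unfolding Sgen_def by blast

lemma S_N: "Sgen l d \<alpha> \<beta> \<subseteq> Nsub l d \<alpha> \<beta>"
  unfolding Nsub_def gen_submodule_def Sgen_def by blast



lemma R_N:
  assumes i0: "i0 \<in> {1..l}" "\<alpha> i0 \<noteq> 0" and j0: "j0 \<in> {l+1..2*l}" "\<beta> (j0 - l) \<noteq> 0"
  shows "Rset l d \<alpha> \<beta> \<subseteq> Nsub l d \<alpha> \<beta>"
proof -
  let ?N = "Nsub l d \<alpha> \<beta>"
  let ?K = "{r \<in> Wcar l. IdD l d \<alpha> \<beta> r \<in> ?N}"
  have NS: "gl_submodule l \<alpha> \<beta> ?N" by (rule N_sub)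
  have K: "gl_submodule l \<alpha> \<beta> ?K"
    unfolding gl_submodule_def
  proof (intro conjI ballI allI)
    show "?K \<subseteq> Wcar l" by blast
    show "(\<lambda>_. 0) \<in> ?K" using Wcar_zero sm_zero[OF NS] by (simp add: linop_zero[OF linop_IdD])
    fix p q assume p: "p \<in> ?K" and q: "q \<in> ?K"
    have "IdD l d \<alpha> \<beta> (\<lambda>m. p m + q m) = (\<lambda>m. 1 * IdD l d \<alpha> \<beta> p m + 1 * IdD l d \<alpha> \<beta> q m)"
      by (simp add: linop_add[OF linop_IdD])
    then show "(\<lambda>m. p m + q m) \<in> ?K" using p q Wcar_add sm_lin[OF NS, of "IdD l d \<alpha> \<beta> p" "IdD l d \<alpha> \<beta> q" 1 1]
      by simp
  next
    fix c p assume p: "p \<in> ?K"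
    have "IdD l d \<alpha> \<beta> (\<lambda>m. c * p m) = (\<lambda>m. c * IdD l d \<alpha> \<beta> p m)"
      by (simp add: linop_scale[OF linop_IdD])
    then show "(\<lambda>m. c * p m) \<in> ?K" using p Wcar_scale sm_scale[OF NS, of "IdD l d \<alpha> \<beta> p" c] by simp
  next
    fix i j p assume i: "i \<in> {1..2*l}" and j: "j \<in> {1..2*l}" and p: "p \<in> ?K"
    then show "Eop l \<alpha> \<beta> i j p \<in> ?K" using Wcar_E[of p l i j] IdD_E[OF i j, of \<alpha> \<beta> d p] sm_E[OF NS, of "IdD l d \<alpha> \<beta> p" i j]
      by simp
  qed
  have w: "wvec \<in> ?K"
  proof -
    have "IdD l d \<alpha> \<beta> wvec \<in> Sgen l d \<alpha> \<beta>" unfolding Sgen_def IdD_def using wvec_CIw by blast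
    then show ?thesis using S_N Wcar_wvec by blast
  qed
  have "Wcar l \<subseteq> ?K" by (rule gen_all[OF K w i0 j0])
  then show ?thesis unfolding Rset_def by blast
qed

lemma wvec_notin_R:
  assumes i0: "i0 \<in> {1..l}" "\<alpha> i0 \<noteq> 0"
  shows "wvec \<notin> Rset l d \<alpha> \<beta>"
proof
  assume "wvec \<in> Rset l d \<alpha> \<beta>"
  then obtain r where r: "r \<in> Wcar l" "wvec = IdD l d \<alpha> \<beta> r" unfolding Rset_def by blast
  show False
  proof (cases "\<exists>m. r m \<noteq> 0")
    case False
    then have "r = (\<lambda>_. 0)" by auto
    then have "wvec = (\<lambda>_. 0)" using r(2) by (simp add: linop_zero[OF linop_IdD])
    from fun_cong[OF this, of "\<lambda>_. (0::nat)"] show False by (simp add: wvec_def)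
  next
    case True
    let ?S = "{m. r m \<noteq> 0}"
    have fin: "finite ((\<lambda>m. m i0) ` ?S)" using WcarD(1)[OF r(1)] by blast
    define k where "k = Max ((\<lambda>m. m i0) ` ?S)"
    have ne: "(\<lambda>m. m i0) ` ?S \<noteq> {}" using True by blast
    have kmax: "\<And>m. r m \<noteq> 0 \<Longrightarrow> m i0 \<le> k" unfolding k_def using fin by (simp add: Max_ge)
    obtain m0 where m0: "r m0 \<noteq> 0" "m0 i0 = k" using Max_in[OF fin ne] unfolding k_def by auto
    define m' where "m' = m0(i0 := Suc k)"
    have i0r: "i0 \<in> {1..2*l}" using i0 by auto
    have r0: "r m' = 0" using kmax[of m'] unfolding m'_def by fastforce
    have x0: "Xop j r m' = 0" if "j \<in> {1..2*l}" "j \<noteq> i0" for j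
    proof -
      have "r (m'(j := m' j - 1)) = 0" using kmax[of "m'(j := m' j - 1)"] that unfolding m'_def by fastforce
      then show ?thesis by (simp add: Xop_def)
    qed
    have "Iop l \<alpha> \<beta> r m' = gam l \<alpha> \<beta> i0 * Xop i0 r m'" by (rule Iop_single[OF i0r r0 x0])
    also have "\<dots> = \<alpha> i0 * r m0" using i0 m0 fun_upd_idem[of m0 i0 k] unfolding m'_def gam_def Xop_def by simp
    finally have "IdD l d \<alpha> \<beta> r m' \<noteq> 0" using r0 m0 i0 by (simp add: IdD_def)
    moreover have "wvec m' = 0" unfolding wvec_def m'_def by (auto dest: fun_cong[of _ _ i0])
    ultimately show False using r(2) by simp
  qed
qed



definition sfree :: "nat \<Rightarrow> vec \<Rightarrow> bool" where
  "sfree i0 q \<longleftrightarrow> (\<forall>m. q m \<noteq> 0 \<longrightarrow> m i0 = 0)"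

lemma reduction_step:
  assumes i0: "i0 \<in> {1..l}" "\<alpha> i0 \<noteq> 0"
  shows "\<forall>p\<in>Wcar l. (\<forall>m. p m \<noteq> 0 \<longrightarrow> m i0 \<le> k) \<longrightarrow>
           (\<exists>r\<in>Wcar l. sfree i0 (\<lambda>m. p m - IdD l d \<alpha> \<beta> r m))"
proof (induction k)
  case 0
  show ?case
  proof (intro ballI impI)
    fix p assume "p \<in> Wcar l" "\<forall>m. p m \<noteq> 0 \<longrightarrow> m i0 \<le> 0"
    then show "\<exists>r\<in>Wcar l. sfree i0 (\<lambda>m. p m - IdD l d \<alpha> \<beta> r m)"
      by (intro bexI[of _ "\<lambda>_. 0"]) (auto simp: sfree_def linop_zero[OF linop_IdD] Wcar_zero)
  qed
next
  case (Suc k)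
  show ?case
  proof (intro ballI impI)
    fix p assume p: "p \<in> Wcar l" and b: "\<forall>m. p m \<noteq> 0 \<longrightarrow> m i0 \<le> Suc k"
    have i0r: "i0 \<in> {1..2*l}" using i0 by auto
    define r1 where "r1 = (\<lambda>m. if m i0 = k then p (m(i0 := Suc k)) / \<alpha> i0 else 0)"
    have r1W: "r1 \<in> Wcar l"
    proof (rule WcarI)
      have "{m. r1 m \<noteq> 0} \<subseteq> (\<lambda>m. m(i0 := k)) ` {m. p m \<noteq> 0}"
      proof
        fix m assume "m \<in> {m. r1 m \<noteq> 0}"
        then have "m i0 = k" "p (m(i0 := Suc k)) \<noteq> 0" by (auto simp: r1_def split: if_splits)
        then show "m \<in> (\<lambda>m. m(i0 := k)) ` {m. p m \<noteq> 0}"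
          by (intro rev_image_eqI[of "m(i0 := Suc k)"]) auto
      qed
      then show "finite {m. r1 m \<noteq> 0}" using WcarD(1)[OF p] finite_surj by blast
      fix m t assume "r1 m \<noteq> 0" "t \<notin> {1..2*l}"
      then show "m t = 0" using WcarD(2)[OF p, of "m(i0 := Suc k)" t] i0r
        by (auto simp: r1_def split: if_splits)
    qed
    define p' where "p' = (\<lambda>m. p m - IdD l d \<alpha> \<beta> r1 m)"
    have p'W: "p' \<in> Wcar l" unfolding p'_def using Wcar_lin[OF p Wcar_IdD[OF r1W], of 1 "-1"] by simp
    have p'b: "\<forall>m. p' m \<noteq> 0 \<longrightarrow> m i0 \<le> k"
    proof (intro allI impI)
      fix m assume ne: "p' m \<noteq> 0"
      show "m i0 \<le> k"
      proof (rule ccontr)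
        assume "\<not> m i0 \<le> k"
        then have big: "m i0 \<ge> Suc k" by simp
        have r0: "r1 m = 0" using big by (simp add: r1_def)
        have x0: "Xop j r1 m = 0" if "j \<in> {1..2*l}" "j \<noteq> i0" for j
          using that big by (simp add: Xop_def r1_def)
        have "Iop l \<alpha> \<beta> r1 m = gam l \<alpha> \<beta> i0 * Xop i0 r1 m" by (rule Iop_single[OF i0r r0 x0])
        also have "\<dots> = p m"
        proof (cases "m i0 = Suc k")
          case True
          have "m(i0 := k, i0 := Suc k) = m" using True by (simp add: fun_upd_idem)
          then show ?thesis using True i0 by (simp add: gam_def Xop_def r1_def)
        next
          case False
          then have "p m = 0" using b big by fastforce
          moreover have "m i0 - 1 \<noteq> k" using False big by linarith
          ultimately show ?thesis by (simp add: Xop_def r1_def)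
        qed
        finally have "p' m = 0" unfolding p'_def IdD_def using r0 by simp
        then show False using ne by simp
      qed
    qed
    obtain r2 where r2: "r2 \<in> Wcar l" "sfree i0 (\<lambda>m. p' m - IdD l d \<alpha> \<beta> r2 m)"
      using Suc.IH p'W p'b by blast
    have "(\<lambda>m. p m - IdD l d \<alpha> \<beta> (\<lambda>m. r1 m + r2 m) m) = (\<lambda>m. p' m - IdD l d \<alpha> \<beta> r2 m)"
      unfolding p'_def by (simp add: linop_add[OF linop_IdD] algebra_simps)
    then show "\<exists>r\<in>Wcar l. sfree i0 (\<lambda>m. p m - IdD l d \<alpha> \<beta> r m)"
      using r2 Wcar_add[OF r1W r2(1)] by (intro bexI[of _ "\<lambda>m. r1 m + r2 m"]) auto
  qed
qed

lemma reduction: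
  assumes i0: "i0 \<in> {1..l}" "\<alpha> i0 \<noteq> 0" and p: "p \<in> Wcar l"
  shows "\<exists>r\<in>Wcar l. sfree i0 (\<lambda>m. p m - IdD l d \<alpha> \<beta> r m)"
proof -
  have "finite ((\<lambda>m. m i0) ` {m. p m \<noteq> 0})" using WcarD(1)[OF p] by blast
  then obtain k where "\<forall>x\<in>(\<lambda>m. m i0) ` {m. p m \<noteq> 0}. x \<le> k" using finite_nat_set_iff_bounded_le by blast
  then have "\<forall>m. p m \<noteq> 0 \<longrightarrow> m i0 \<le> k" by blast
  then show ?thesis using reduction_step[of i0 l \<alpha> k d \<beta>, OF i0] p by blast
qed



lemma sfree_D0: "sfree i0 q \<Longrightarrow> Dop i0 q = (\<lambda>_. 0)"
  by (auto simp: sfree_def Dop_def intro!: ext)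

lemma sfree_D: "sfree i0 q \<Longrightarrow> j \<noteq> i0 \<Longrightarrow> sfree i0 (Dop j q)"
  by (auto simp: sfree_def Dop_def)

lemma const_vec:
  assumes q: "q \<in> Wcar l" and D: "\<And>k. k \<in> {1..2*l} \<Longrightarrow> Dop k q = (\<lambda>_. 0)"
  shows "q = (\<lambda>m. q (\<lambda>_. 0) * wvec m)"
proof (rule ext)
  fix m
  show "q m = q (\<lambda>_. 0) * wvec m"
  proof (cases "m = (\<lambda>_. 0)")
    case True then show ?thesis by (simp add: wvec_def)
  next
    case False
    then obtain k where k: "m k \<noteq> 0" by auto
    have "q m = 0"
    proof (rule ccontr)
      assume qm: "q m \<noteq> 0"
      then have kr: "k \<in> {1..2*l}" using WcarD(2)[OF q, of m k] k by blast
      have "m(k := m k - 1, k := m k - 1 + 1) = m" using k by (simp add: fun_upd_idem)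
      then have "Dop k q (m(k := m k - 1)) = of_nat (m k) * q m" using k by (simp add: Dop_def)
      then have "Dop k q (m(k := m k - 1)) \<noteq> 0" using k qm by simp
      then show False using D[OF kr] by simp
    qed
    then show ?thesis using False by (simp add: wvec_def)
  qed
qed

lemma descent:
  assumes M: "gl_submodule l \<alpha> \<beta> M"
    and i0: "i0 \<in> {1..l}" "\<alpha> i0 \<noteq> 0" and j0: "j0 \<in> {l+1..2*l}" "\<beta> (j0 - l) \<noteq> 0"
  shows "q \<in> M \<Longrightarrow> sfree i0 q \<Longrightarrow> degle l n q \<Longrightarrow> q \<noteq> (\<lambda>_. 0) \<Longrightarrow> wvec \<in> M"
proof (induction n arbitrary: q rule: less_induct)
  case (less n)
  note q = less.prems
  have qW: "q \<in> Wcar l" using sm_Wcar[OF M q(1)] .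
  have i0r: "i0 \<in> {1..2*l}" using i0 by auto
  have j0r: "j0 \<in> {1..2*l}" using j0 by auto
  have D0: "Dop i0 q = (\<lambda>_. 0)" by (rule sfree_D0[OF q(2)])
  have recur: "wvec \<in> M" if j: "j \<in> {1..2*l}" "j \<noteq> i0" and DM: "Dop j q \<in> M" and nz: "Dop j q \<noteq> (\<lambda>_. 0)" for j
  proof -
    obtain m where "Dop j q m \<noteq> 0" using nz by auto
    then have "tdeg l m < n" using degle_D[OF q(3) j(1)] by blast
    then have "n - 1 < n" by linarith
    moreover have "sfree i0 (Dop j q)" using sfree_D[OF q(2) j(2)] .
    moreover have "degle l (n - 1) (Dop j q)" using degle_D'[OF q(3) j(1)] .
    ultimately show ?thesis using less.IH DM nz by blast
  qed
  show "wvec \<in> M"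
  proof (cases "\<exists>j\<in>{l+1..2*l}. Dop j q \<noteq> (\<lambda>_. 0)")
    case True
    then obtain j where j: "j \<in> {l+1..2*l}" "Dop j q \<noteq> (\<lambda>_. 0)" by blast
    have jr: "j \<in> {1..2*l}" "j \<noteq> i0" using j i0 by auto
    have DD: "Dop j (Dop i0 q) = (\<lambda>_. 0)" using D0 by (simp add: linop_zero[OF linop_D])
    have eq: "Dop j q = (\<lambda>m. (- 1 / \<alpha> i0) * Eop l \<alpha> \<beta> i0 j q m + \<beta> (j - l) * q m)"
    proof (rule ext)
      fix m
      have "Eop l \<alpha> \<beta> i0 j q m = - \<alpha> i0 * Dop j q m + \<alpha> i0 * \<beta> (j - l) * q m"
        using E3[of i0 l j \<alpha> \<beta> q m] i0 j DD D0 by simp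
      then show "Dop j q m = (- 1 / \<alpha> i0) * Eop l \<alpha> \<beta> i0 j q m + \<beta> (j - l) * q m"
        using i0(2) by (simp add: field_simps)
    qed
    have "Dop j q \<in> M" unfolding eq by (rule sm_lin[OF M sm_E[OF M q(1) i0r jr(1)] q(1)])
    then show ?thesis by (rule recur[OF jr _ j(2)])
  next
    case notA: False
    show ?thesis
    proof (cases "\<exists>i\<in>{1..l}. i \<noteq> i0 \<and> Dop i q \<noteq> (\<lambda>_. 0)")
      case True
      then obtain i where i: "i \<in> {1..l}" "i \<noteq> i0" "Dop i q \<noteq> (\<lambda>_. 0)" by blast
      have ir: "i \<in> {1..2*l}" using i by auto
      have Dj0: "Dop j0 q = (\<lambda>_. 0)" using notA j0 by blast
      have DD: "Dop j0 (Dop i q) = (\<lambda>_. 0)" using Dj0 by (simp add: D_D linop_zero[OF linop_D])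
      have eq: "Dop i q = (\<lambda>m. (1 / \<beta> (j0 - l)) * Eop l \<alpha> \<beta> i j0 q m + (- \<alpha> i) * q m)"
      proof (rule ext)
        fix m
        have "Eop l \<alpha> \<beta> i j0 q m = \<beta> (j0 - l) * Dop i q m + \<alpha> i * \<beta> (j0 - l) * q m"
          using E3[of i l j0 \<alpha> \<beta> q m] i j0 DD Dj0 by simp
        then show "Dop i q m = (1 / \<beta> (j0 - l)) * Eop l \<alpha> \<beta> i j0 q m + (- \<alpha> i) * q m"
          using j0(2) by (simp add: field_simps)
      qed
      have "Dop i q \<in> M" unfolding eq by (rule sm_lin[OF M sm_E[OF M q(1) ir j0r] q(1)])
      then show ?thesis by (rule recur[OF ir i(2) _ i(3)])
    next
      case notB: False
      have allD: "Dop k q = (\<lambda>_. 0)" if "k \<in> {1..2*l}" for k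
      proof (cases "k = i0")
        case True then show ?thesis using D0 by simp
      next
        case False
        show ?thesis
        proof (cases "k \<le> l")
          case True then show ?thesis using notB False that by auto
        next
          case False then show ?thesis using notA that by auto
        qed
      qed
      have qc: "q = (\<lambda>m. q (\<lambda>_. 0) * wvec m)" by (rule const_vec[OF qW allD])
      have c: "q (\<lambda>_. 0) \<noteq> 0"
      proof
        assume "q (\<lambda>_. 0) = 0"
        then have "q = (\<lambda>_. 0)" using qc by simp
        then show False using q(4) by simp
      qed
      have "(\<lambda>m. (1 / q (\<lambda>_. 0)) * q m) \<in> M" by (rule sm_scale[OF M q(1)])
      moreover have "(\<lambda>m. (1 / q (\<lambda>_. 0)) * q m) = wvec"
        using c by (subst qc) simp
      ultimately show ?thesis by simp
    qed
  qed
qed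

theorem theorem9p2:
  fixes l :: nat and \<alpha> \<beta> :: "nat \<Rightarrow> complex" and d :: complex
  assumes "\<exists>i\<in>{1..l}. \<alpha> i \<noteq> 0"
    and "\<exists>i\<in>{1..l}. \<beta> i \<noteq> 0"
  shows "irreducible_quotient l \<alpha> \<beta> (Nsub l d \<alpha> \<beta>)"
proof -
  obtain i0 where i0: "i0 \<in> {1..l}" "\<alpha> i0 \<noteq> 0" using assms(1) by blast
  obtain j1 where j1: "j1 \<in> {1..l}" "\<beta> j1 \<noteq> 0" using assms(2) by blast
  define j0 where "j0 = j1 + l"
  have j0: "j0 \<in> {l+1..2*l}" "\<beta> (j0 - l) \<noteq> 0" using j1 unfolding j0_def by auto
  have NR: "Nsub l d \<alpha> \<beta> = Rset l d \<alpha> \<beta>" using N_R R_N[of i0 l \<alpha> j0 \<beta> d, OF i0 j0] by blast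
  show ?thesis unfolding irreducible_quotient_def
  proof (intro conjI allI impI)
    show "Nsub l d \<alpha> \<beta> \<noteq> Wcar l" using NR wvec_notin_R[of i0 l \<alpha> d \<beta>, OF i0] Wcar_wvec by blast
  next
    fix M assume a: "gl_submodule l \<alpha> \<beta> M \<and> Nsub l d \<alpha> \<beta> \<subseteq> M"
    then have M: "gl_submodule l \<alpha> \<beta> M" and NM: "Rset l d \<alpha> \<beta> \<subseteq> M" using NR by auto
    show "M = Nsub l d \<alpha> \<beta> \<or> M = Wcar l"
    proof (cases "M \<subseteq> Rset l d \<alpha> \<beta>")
      case True then show ?thesis using NM NR by blast
    next
      case False
      then obtain p where p: "p \<in> M" "p \<notin> Rset l d \<alpha> \<beta>" by blast
      have pW: "p \<in> Wcar l" using sm_Wcar[OF M p(1)] .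
      obtain r where r: "r \<in> Wcar l" "sfree i0 (\<lambda>m. p m - IdD l d \<alpha> \<beta> r m)"
        using reduction[of i0 l \<alpha> p d \<beta>, OF i0 pW] by blast
      have IR: "IdD l d \<alpha> \<beta> r \<in> M" using NM r(1) unfolding Rset_def by blast
      have qM: "(\<lambda>m. 1 * p m + (-1) * IdD l d \<alpha> \<beta> r m) \<in> M" by (rule sm_lin[OF M p(1) IR])
      then have qM': "(\<lambda>m. p m - IdD l d \<alpha> \<beta> r m) \<in> M" by simp
      have nz: "(\<lambda>m. p m - IdD l d \<alpha> \<beta> r m) \<noteq> (\<lambda>_. 0)"
      proof
        assume "(\<lambda>m. p m - IdD l d \<alpha> \<beta> r m) = (\<lambda>_. 0)"
        then have "p = IdD l d \<alpha> \<beta> r" by (auto simp: fun_eq_iff dest: fun_cong)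
        then show False using p(2) r(1) unfolding Rset_def by blast
      qed
      obtain n where "degle l n (\<lambda>m. p m - IdD l d \<alpha> \<beta> r m)"
        using degle_Wcar[OF sm_Wcar[OF M qM']] by blast
      then have "wvec \<in> M" using descent[OF M i0 j0 qM' r(2) _ nz] by blast
      then have "Wcar l \<subseteq> M" by (rule gen_all[OF M _ i0 j0])
      then show ?thesis using M unfolding gl_submodule_def by blast
    qed
  qed
qed


end
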